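(* With the mesh, the coefficients $a^{(n)}_{n-k}$ and the DCC kernels $p^{(n)}_{n-k}$ as in the context (in particular $\tau_{n-1}\le\tau_n$ for $2\le n\le N$), for every $1\le n\le N$ we have $p^{(n)}_{n-k}\ge0$ for $1\le k\le n$, and $$\sum_{j=1}^n p^{(n)}_{n-j}\le \omega_{1+\alpha}(t_{n-1/2}).$$
   Context: Fix $T>0$, $0<\alpha<1$ and a mesh $0=t_0<t_1<\dots<t_N=T$ with step sizes $\tau_n=t_n-t_{n-1}$ satisfying $\tau_{n-1}\le\tau_n$ for $2\le n\le N$. Set $t_{-1/2}=t_0$, $t_{n-1/2}=t_{n-1}+\tau_n/2$ for $1\le n\le N$, $\tau_{1/2}=\tau_1/2$ and $\tau_{n-1/2}=(\tau_n+\tau_{n-1})/2$ for $n\ge 2$. Let $\omega_\gamma(t)=t^{\gamma-1}/\Gamma(\gamma)$ for $t>0$. For $1\le n\le N$ and $1\le k\le n$ define $$a^{(n)}_{n-k}=\frac{1}{\tau_{k-1/2}}\int_{t_{k-3/2}}^{t_{k-1/2}}\omega_{1-\alpha}(t_{n-1/2}-s)\,ds .$$ The discrete complementary convolution (DCC) kernels are defined by $p^{(n)}_0=1/a^{(n)}_0$ and $p^{(n)}_{n-k}=\frac{1}{a^{(k)}_0}\sum_{j=k+1}^n\big(a^{(j)}_{j-k-1}-a^{(j)}_{j-k}\big)p^{(n)}_{n-j}$ for $1\le k\le n-1$; equivalently $\sum_{j=k}^n p^{(n)}_{n-j}a^{(j)}_{j-k}=1$ for all $1\le k\le n$. *)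

theory Defs
  imports "HOL-Analysis.Analysis"
begin

definition omega :: "real \<Rightarrow> real \<Rightarrow> real" where
  "omega \<gamma> s = s powr (\<gamma> - 1) / Gamma \<gamma>"

definition tau :: "(nat \<Rightarrow> real) \<Rightarrow> nat \<Rightarrow> real" where
  "tau t n = t n - t (n - 1)"

definition tmid :: "(nat \<Rightarrow> real) \<Rightarrow> nat \<Rightarrow> real" where
  "tmid t n = (if n = 0 then t 0 else t (n - 1) + tau t n / 2)"

definition tauhalf :: "(nat \<Rightarrow> real) \<Rightarrow> nat \<Rightarrow> real" where
  "tauhalf t n = (if n \<le> 1 then tau t 1 / 2 else (tau t n + tau t (n - 1)) / 2)"

text \<open>acoef t alpha n m = a^{(n)}_m, i.e. a^{(n)}_{n-k} with k = n - m.\<close>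
definition acoef :: "(nat \<Rightarrow> real) \<Rightarrow> real \<Rightarrow> nat \<Rightarrow> nat \<Rightarrow> real" where
  "acoef t \<alpha> n m = (let k = n - m in
     (1 / tauhalf t k) *
       integral {tmid t (k - 1) .. tmid t k} (\<lambda>s. omega (1 - \<alpha>) (tmid t n - s)))"

text \<open>DCC kernels: dcc A n m = p^{(n)}_m (with k = n - m), where A n m = a^{(n)}_m.
  p^{(n)}_0 = 1/a^{(n)}_0 and, for 1 <= k <= n-1,
  p^{(n)}_{n-k} = (1/a^{(k)}_0) * sum_{j=k+1}^n (a^{(j)}_{j-k-1} - a^{(j)}_{j-k}) p^{(n)}_{n-j}.
  Values with m >= n (i.e. k <= 0) are irrelevant and set to 0.\<close>
function dcc :: "(nat \<Rightarrow> nat \<Rightarrow> real) \<Rightarrow> nat \<Rightarrow> nat \<Rightarrow> real" where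
  "dcc A n m =
     (if m = 0 then 1 / A n 0
      else if n \<le> m then 0
      else (1 / A (n - m) 0) *
        (\<Sum>j = n - m + 1 .. n. (A j (j - (n - m) - 1) - A j (j - (n - m))) * dcc A n (n - j)))"
  by pat_completeness auto
termination
  by (relation "Wellfounded.measure (\<lambda>(A, n, m). m)") auto

end

theory Submission
  imports Defs
begin

lemma int_lb:
  fixes f :: "real \<Rightarrow> real"
  assumes "a \<le> b" "f integrable_on {a..b}" "\<And>x. a < x \<Longrightarrow> x < b \<Longrightarrow> C \<le> f x"
  shows "C * (b - a) \<le> integral {a..b} f"
proof -
  have "((\<lambda>x. C) has_integral C * (b - a)) {a<..<b}"
    using has_integral_const_real[of C a b] assms(1) by (simp add: has_integral_Icc_iff_Ioo mult.commute)
  moreover have "(f has_integral integral {a..b} f) {a<..<b}"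
    using assms(2) by (simp add: has_integral_Icc_iff_Ioo[symmetric] integrable_integral)
  ultimately show ?thesis by (rule has_integral_le) (use assms(3) in auto)
qed

lemma int_ub:
  fixes f :: "real \<Rightarrow> real"
  assumes "a \<le> b" "f integrable_on {a..b}" "\<And>x. a < x \<Longrightarrow> x < b \<Longrightarrow> f x \<le> C"
  shows "integral {a..b} f \<le> C * (b - a)"
proof -
  have "((\<lambda>x. C) has_integral C * (b - a)) {a<..<b}"
    using has_integral_const_real[of C a b] assms(1) by (simp add: has_integral_Icc_iff_Ioo mult.commute)
  moreover have "(f has_integral integral {a..b} f) {a<..<b}"
    using assms(2) by (simp add: has_integral_Icc_iff_Ioo[symmetric] integrable_integral)
  ultimately show ?thesis using has_integral_le[of f _ "{a<..<b}" "\<lambda>x. C"] assms(3) by auto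
qed

lemma omega_pos: "x > 0 \<Longrightarrow> \<gamma> > 0 \<Longrightarrow> omega \<gamma> x > 0"
  unfolding omega_def by (simp add: Gamma_real_pos)

lemma omega_antimono: "0 < x \<Longrightarrow> x \<le> y \<Longrightarrow> 0 < \<gamma> \<Longrightarrow> \<gamma> \<le> 1 \<Longrightarrow> omega \<gamma> y \<le> omega \<gamma> x"
  unfolding omega_def by (intro divide_right_mono powr_mono2') (auto simp: Gamma_real_pos less_imp_le)

lemma G_integral:
  assumes "0 < \<alpha>" "0 \<le> x"
  shows "((\<lambda>s. omega \<alpha> s) has_integral omega (1 + \<alpha>) x) {0..x}"
proof -
  have "((\<lambda>s. s powr (\<alpha> - 1)) has_integral x powr \<alpha> / \<alpha>) {0..x}"
    using has_integral_powr_from_0[of "\<alpha> - 1" x] assms by simp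
  from has_integral_divide[OF this, of "Gamma \<alpha>"]
  have h: "((\<lambda>s. s powr (\<alpha> - 1) / Gamma \<alpha>) has_integral x powr \<alpha> / (\<alpha> * Gamma \<alpha>)) {0..x}" by simp
  have "\<alpha> \<notin> \<int>\<^sub>\<le>\<^sub>0" using assms by (auto elim: nonpos_Ints_cases)
  hence "Gamma (1 + \<alpha>) = \<alpha> * Gamma \<alpha>" using Gamma_plus1[of \<alpha>] by (simp add: add.commute)
  thus ?thesis unfolding omega_def using h by simp
qed

lemma F_integrable:
  assumes "0 < \<alpha>" "\<alpha> < 1" "0 \<le> C"
  shows "(\<lambda>s. omega (1 - \<alpha>) (C - s)) integrable_on {0..C}"
proof -
  have "(\<lambda>s. s powr (- \<alpha>)) integrable_on {0..C}"
    using integrable_on_powr_from_0[of "-\<alpha>" C] assms by simp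
  hence "(\<lambda>s. s powr (- \<alpha>)) integrable_on cbox 0 C" by simp
  from integrable_affinity[OF this, of "-1" C]
  have "(\<lambda>s. (C - s) powr (- \<alpha>)) integrable_on {0..C}" by simp
  from integrable_on_divide[OF this, of "Gamma (1 - \<alpha>)"]
  show ?thesis unfolding omega_def by simp
qed

lemma beta_one:
  assumes "0 < \<alpha>" "\<alpha> < 1" "0 < C"
  shows "((\<lambda>s. omega (1 - \<alpha>) (C - s) * omega \<alpha> s) has_integral 1) {0..C}"
proof -
  define f where "f = (\<lambda>t::real. t powr (\<alpha> - 1) * (1 - t) powr (1 - \<alpha> - 1))"
  have B: "(f has_integral Beta \<alpha> (1 - \<alpha>)) (cbox 0 1)"
    using has_integral_Beta_real[of \<alpha> "1 - \<alpha>"] assms unfolding f_def by simp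
  have Bv: "Beta \<alpha> (1 - \<alpha>) = Gamma \<alpha> * Gamma (1 - \<alpha>)"
    by (simp add: Beta_def)
  have Gp: "Gamma \<alpha> > 0" "Gamma (1 - \<alpha>) > 0" using assms by (auto intro: Gamma_real_pos)
  from has_integral_affinity'[OF B, of "1/C" 0] assms
  have h1: "((\<lambda>x. f (x / C)) has_integral (Beta \<alpha> (1 - \<alpha>) * C)) {0..C}"
    by (simp add: divide_simps cbox_interval mult.commute)
  have eq: "f (s / C) / (C * Beta \<alpha> (1 - \<alpha>)) = omega (1 - \<alpha>) (C - s) * omega \<alpha> s"
    if "s \<in> {0..C}" for s
  proof -
    have s: "0 \<le> s" "s \<le> C" using that by auto
    have "1 - s / C = (C - s) / C" using assms by (simp add: field_simps)
    hence "f (s / C) = (s powr (\<alpha> - 1) / C powr (\<alpha> - 1)) * ((C - s) powr (- \<alpha>) / C powr (- \<alpha>))"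
      unfolding f_def using s assms by (simp add: powr_divide)
    also have "C powr (\<alpha> - 1) * C powr (- \<alpha>) = C powr (-1)"
      by (simp add: powr_add[symmetric])
    hence "(s powr (\<alpha> - 1) / C powr (\<alpha> - 1)) * ((C - s) powr (- \<alpha>) / C powr (- \<alpha>))
         = C * (s powr (\<alpha> - 1) * (C - s) powr (- \<alpha>))"
      using assms by (simp add: field_simps powr_minus)
    finally show ?thesis unfolding omega_def Bv using assms Gp by (simp add: field_simps)
  qed
  from has_integral_divide[OF h1, of "C * Beta \<alpha> (1 - \<alpha>)"]
  have "((\<lambda>x. f (x / C) / (C * Beta \<alpha> (1 - \<alpha>))) has_integral 1) {0..C}"
    using assms Gp Bv by simp
  thus ?thesis using eq has_integral_cong by (metis (no_types, lifting))
qed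

lemma cheb:
  fixes f g :: "real \<Rightarrow> real"
  assumes ab: "a < b" and fi: "f integrable_on {a..b}" and gi: "g integrable_on {a..b}"
    and fgi: "(\<lambda>x. f x * g x) integrable_on {a..b}"
    and fm: "\<And>x y. a < x \<Longrightarrow> x \<le> y \<Longrightarrow> y < b \<Longrightarrow> f x \<le> f y"
    and gm: "\<And>x y. a < x \<Longrightarrow> x \<le> y \<Longrightarrow> y \<le> b \<Longrightarrow> g y \<le> g x"
  shows "integral {a..b} (\<lambda>x. f x * g x) \<le> integral {a..b} f / (b - a) * integral {a..b} g"
proof -
  define \<mu> where "\<mu> = integral {a..b} f / (b - a)"
  have I: "integral {a..b} f = \<mu> * (b - a)" using ab by (simp add: \<mu>_def)
  have ex: "\<exists>p. a < p \<and> p < b \<and> f p \<le> \<mu>"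
  proof (rule ccontr)
    assume "\<not> ?thesis"
    hence gt: "\<And>p. a < p \<Longrightarrow> p < b \<Longrightarrow> \<mu> < f p" by force
    define m where "m = (a + b) / 2"
    have m: "a < m" "m < b" using ab by (auto simp: m_def)
    have 1: "\<mu> * (m - a) \<le> integral {a..m} f"
      by (rule int_lb) (use m integrable_subinterval_real[OF fi] in auto, meson gt less_imp_le less_trans m(2))
    have 2: "f m * (b - m) \<le> integral {m..b} f"
      by (rule int_lb) (use m fm integrable_subinterval_real[OF fi] in auto)
    have 3: "integral {a..m} f + integral {m..b} f = integral {a..b} f"
      by (rule Henstock_Kurzweil_Integration.integral_combine) (use m fi in auto)
    have "\<mu> * (b - m) < f m * (b - m)" using gt[of m] m by auto
    hence "\<mu> * (b - a) < integral {a..b} f" using 1 2 3 by (simp add: algebra_simps)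
    thus False using I by simp
  qed
  define L where "L = {s. a < s \<and> s < b \<and> f s \<le> \<mu>}"
  define s0 where "s0 = Sup L"
  obtain p where p: "a < p" "p < b" "f p \<le> \<mu>" using ex by auto
  have Lne: "L \<noteq> {}" using p by (auto simp: L_def)
  have Lbd: "bdd_above L" by (auto simp: L_def bdd_above_def intro!: exI[of _ b])
  have s0a: "a < s0" using cSup_upper[OF _ Lbd, of p] p by (auto simp: L_def s0_def)
  have s0b: "s0 \<le> b" using cSup_least[OF Lne, of b] by (auto simp: L_def s0_def)
  define G where "G = g s0"
  have pw: "(f x - \<mu>) * (g x - G) \<le> 0" if x: "a < x" "x < b" for x
  proof (cases "x < s0")
    case True
    then obtain y where y: "y \<in> L" "x < y" using less_cSup_iff[OF Lne Lbd] by (auto simp: s0_def)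
    have "f x \<le> \<mu>" using fm[of x y] y x by (auto simp: L_def)
    moreover have "G \<le> g x" unfolding G_def using gm[of x s0] True x s0b by auto
    ultimately show ?thesis by (simp add: mult_nonpos_nonneg)
  next
    case False
    show ?thesis
    proof (cases "x = s0")
      case True thus ?thesis by (simp add: G_def)
    next
      case False
      hence "s0 < x" using \<open>\<not> x < s0\<close> by auto
      hence "x \<notin> L" using cSup_upper[OF _ Lbd, of x] by (auto simp: s0_def)
      hence "\<mu> < f x" using x by (auto simp: L_def)
      moreover have "g x \<le> G" unfolding G_def using gm[of s0 x] s0a \<open>s0 < x\<close> x by auto
      ultimately show ?thesis by (simp add: mult_nonneg_nonpos)
    qed
  qed
  have hfg: "((\<lambda>x. f x * g x) has_integral integral {a..b} (\<lambda>x. f x * g x)) {a..b}"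
    using fgi by (simp add: integrable_integral)
  have hf: "(f has_integral integral {a..b} f) {a..b}" using fi by (simp add: integrable_integral)
  have hg: "(g has_integral integral {a..b} g) {a..b}" using gi by (simp add: integrable_integral)
  have hc: "((\<lambda>x. \<mu> * G) has_integral (\<mu> * G) * (b - a)) {a..b}"
    using has_integral_const_real[of "\<mu> * G" a b] ab by (simp add: mult.commute)
  have comb: "((\<lambda>x. f x * g x - G * f x - \<mu> * g x + \<mu> * G) has_integral
      (integral {a..b} (\<lambda>x. f x * g x) - G * integral {a..b} f - \<mu> * integral {a..b} g + (\<mu> * G) * (b - a))) {a..b}"
    by (intro has_integral_add has_integral_diff has_integral_mult_right hfg hf hg hc)
  hence comb': "((\<lambda>x. (f x - \<mu>) * (g x - G)) has_integral
      (integral {a..b} (\<lambda>x. f x * g x) - \<mu> * integral {a..b} g)) {a<..<b}"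
    unfolding has_integral_Icc_iff_Ioo I by (simp add: algebra_simps)
  have "integral {a..b} (\<lambda>x. f x * g x) - \<mu> * integral {a..b} g \<le> 0"
    using has_integral_le[OF comb' has_integral_0[of "{a<..<b}"]] pw by auto
  thus ?thesis by (simp add: \<mu>_def)
qed

lemma cells_sum:
  fixes c :: "nat \<Rightarrow> real" and h :: "real \<Rightarrow> real"
  assumes mono: "\<And>i j. i \<le> j \<Longrightarrow> j \<le> m \<Longrightarrow> c i \<le> c j"
    and hi: "h integrable_on {c 0..c m}"
  shows "integral {c 0..c m} h = (\<Sum>k=1..m. integral {c (k-1)..c k} h)"
  using assms
proof (induction m)
  case 0 thus ?case by simp
next
  case (Suc m)
  have hm: "h integrable_on {c 0..c m}"
    by (rule integrable_subinterval_real[OF Suc.prems(2)]) (use Suc.prems(1) in auto)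
  have IH: "integral {c 0..c m} h = (\<Sum>k=1..m. integral {c (k-1)..c k} h)"
    by (rule Suc.IH) (use Suc.prems(1) hm in auto)
  have "integral {c 0..c m} h + integral {c m..c (Suc m)} h = integral {c 0..c (Suc m)} h"
    by (rule Henstock_Kurzweil_Integration.integral_combine) (use Suc.prems in auto)
  thus ?case using IH by simp
qed

lemma dcc_0: "dcc A n 0 = 1 / A n 0"
  by (subst dcc.simps) simp

lemma dcc_rec: "0 < m \<Longrightarrow> m < n \<Longrightarrow> dcc A n m = (1 / A (n - m) 0) *
        (\<Sum>j = n - m + 1 .. n. (A j (j - (n - m) - 1) - A j (j - (n - m))) * dcc A n (n - j))"
  by (subst dcc.simps) simp

declare dcc.simps[simp del]

lemma dcc_nonneg:
  assumes pos: "\<And>j. 1 \<le> j \<Longrightarrow> j \<le> n \<Longrightarrow> A j 0 > 0"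
    and mon: "\<And>j k. 1 \<le> k \<Longrightarrow> k + 1 \<le> j \<Longrightarrow> j \<le> n \<Longrightarrow> A j (j - k) \<le> A j (j - k - 1)"
  shows "m < n \<Longrightarrow> dcc A n m \<ge> 0"
proof (induction m rule: less_induct)
  case (less m)
  show ?case
  proof (cases "m = 0")
    case True thus ?thesis using pos[of n] less.prems by (simp add: dcc_0)
  next
    case False
    have "(\<Sum>j = n - m + 1 .. n. (A j (j - (n - m) - 1) - A j (j - (n - m))) * dcc A n (n - j)) \<ge> 0"
    proof (rule sum_nonneg)
      fix j assume j: "j \<in> {n - m + 1..n}"
      have "A j (j - (n - m)) \<le> A j (j - (n - m) - 1)"
        using mon[of "n - m" j] j less.prems False by auto
      moreover have "dcc A n (n - j) \<ge> 0" using less.IH[of "n - j"] j False less.prems by auto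
      ultimately show "(A j (j - (n - m) - 1) - A j (j - (n - m))) * dcc A n (n - j) \<ge> 0" by simp
    qed
    moreover have "A (n - m) 0 > 0" using pos[of "n - m"] less.prems False by auto
    ultimately show ?thesis using False less.prems by (simp add: dcc_rec)
  qed
qed

lemma dcc_identity:
  assumes pos: "\<And>j. 1 \<le> j \<Longrightarrow> j \<le> n \<Longrightarrow> A j 0 \<noteq> 0"
  shows "1 \<le> k \<Longrightarrow> k \<le> n \<Longrightarrow> (\<Sum>j=k..n. dcc A n (n - j) * A j (j - k)) = 1"
proof (induction "n - k" arbitrary: k)
  case 0
  hence "k = n" by simp
  thus ?case using pos[of n] 0 by (simp add: dcc_0)
next
  case (Suc d)
  have k: "k < n" using Suc by simp
  have IH: "(\<Sum>j=k+1..n. dcc A n (n - j) * A j (j - (k+1))) = 1"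
    using Suc.hyps(1)[of "k+1"] Suc.hyps(2) k by simp
  have rec: "dcc A n (n - k) * A k 0 = (\<Sum>j = k + 1 .. n. (A j (j - k - 1) - A j (j - k)) * dcc A n (n - j))"
    using dcc_rec[of "n - k" n A] k Suc.prems pos[of k] by simp
  have "(\<Sum>j=k..n. dcc A n (n - j) * A j (j - k)) = dcc A n (n - k) * A k 0 + (\<Sum>j=k+1..n. dcc A n (n - j) * A j (j - k))"
    using k by (simp add: sum.atLeast_Suc_atMost)
  also have "\<dots> = (\<Sum>j=k+1..n. dcc A n (n - j) * A j (j - (k+1)))"
    unfolding rec by (simp add: sum.distrib[symmetric] algebra_simps)
  finally show ?case using IH by simp
qed

lemma sum_swap_tri:
  fixes h :: "nat \<Rightarrow> nat \<Rightarrow> real"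
  shows "(\<Sum>j=1..n. \<Sum>k=1..j. h j k) = (\<Sum>k=1..n. \<Sum>j=k..n. h j k)"
proof (induction n)
  case 0 thus ?case by simp
next
  case (Suc n)
  have "(\<Sum>k=1..Suc n. \<Sum>j=k..Suc n. h j k) = (\<Sum>k=1..n. \<Sum>j=k..Suc n. h j k) + h (Suc n) (Suc n)"
    by simp
  also have "(\<Sum>k=1..n. \<Sum>j=k..Suc n. h j k) = (\<Sum>k=1..n. (\<Sum>j=k..n. h j k) + h (Suc n) k)"
    by (intro sum.cong) auto
  finally show ?case using Suc by (simp add: sum.distrib)
qed

theorem lemma2p3:
  fixes T \<alpha> :: real and N :: nat and t :: "nat \<Rightarrow> real"
  assumes "T > 0" and "0 < \<alpha>" and "\<alpha> < 1"
    and "t 0 = 0" and "t N = T"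
    and "\<And>n. 1 \<le> n \<Longrightarrow> n \<le> N \<Longrightarrow> t (n - 1) < t n"
    and "\<And>n. 2 \<le> n \<Longrightarrow> n \<le> N \<Longrightarrow> tau t (n - 1) \<le> tau t n"
  shows "\<forall>n\<in>{1..N}.
           (\<forall>k\<in>{1..n}. dcc (acoef t \<alpha>) n (n - k) \<ge> 0) \<and>
           (\<Sum>j = 1..n. dcc (acoef t \<alpha>) n (n - j)) \<le> omega (1 + \<alpha>) (tmid t n)"
proof -
  note a0 = assms(2) and a1 = assms(3)
  define c where "c = tmid t"
  define A where "A = acoef t \<alpha>"
  have c0: "c 0 = 0" using assms(4) by (simp add: c_def tmid_def)
  have th: "tauhalf t k = c k - c (k - 1)" if "1 \<le> k" for k
    using that by (cases "k = 1") (auto simp: c_def tmid_def tauhalf_def tau_def field_simps)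
  have cstep: "c (k - 1) < c k" if "1 \<le> k" "k \<le> N" for k
  proof -
    have "tau t k > 0" using assms(6)[OF that] by (simp add: tau_def)
    moreover have "k \<ge> 2 \<Longrightarrow> tau t (k - 1) > 0" using assms(6)[of "k - 1"] that by (simp add: tau_def)
    ultimately show ?thesis using th[OF that(1)] that
      by (cases "k = 1") (auto simp: tauhalf_def)
  qed
  have cmono: "c i \<le> c j" if "i \<le> j" "j \<le> N" for i j
    using that
  proof (induction j)
    case 0 thus ?case by simp
  next
    case (Suc j)
    show ?case
    proof (cases "i = Suc j")
      case True thus ?thesis by simp
    next
      case False
      hence "c i \<le> c j" using Suc by auto
      also have "c j < c (Suc j)" using cstep[of "Suc j"] Suc.prems by simp
      finally show ?thesis by simp
    qed
  qed
  have Aeq: "A j m = (1 / (c (j - m) - c (j - m - 1))) *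
       integral {c (j - m - 1) .. c (j - m)} (\<lambda>s. omega (1 - \<alpha>) (c j - s))" if "1 \<le> j - m" for j m
    using th[OF that] unfolding A_def acoef_def Let_def c_def by simp
  define G where "G = omega \<alpha>"
  define \<Delta> where "\<Delta> k = integral {c (k - 1)..c k} G" for k
  have Ginteg: "G integrable_on {0..x}" if "0 \<le> x" for x
    using G_integral[OF a0 that] unfolding G_def by blast
  have P: "(\<forall>j. 1 \<le> j \<and> j \<le> N \<longrightarrow> A j 0 > 0) \<and>
    (\<forall>j k. 1 \<le> k \<and> k + 1 \<le> j \<and> j \<le> N \<longrightarrow> A j (j - k) \<le> A j (j - k - 1)) \<and>
    (\<forall>j. 1 \<le> j \<and> j \<le> N \<longrightarrow> (\<Sum>k=1..j. A j (j - k) * \<Delta> k) \<ge> 1)"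
  proof (intro conjI allI impI)
    fix j assume j: "1 \<le> j \<and> j \<le> N"
    define C where "C = c j"
    define F where "F s = omega (1 - \<alpha>) (C - s)" for s
    have C: "0 < C"
    proof -
      have "0 \<le> c (j - 1)" using cmono[of 0 "j - 1"] j c0 by fastforce
      thus ?thesis using cstep[of j] j unfolding C_def by simp
    qed
    have Fi: "F integrable_on {0..C}" unfolding F_def using F_integrable[OF a0 a1] C by simp
    have ck: "0 \<le> c (k - 1)" "c (k - 1) < c k" "c k \<le> C" if "1 \<le> k" "k \<le> j" for k
      using cmono[of 0 "k - 1"] cstep[of k] cmono[of k j] that j c0 by (auto simp: C_def)
    have Fk: "F integrable_on {c (k - 1)..c k}" if "1 \<le> k" "k \<le> j" for k
      by (rule integrable_subinterval_real[OF Fi]) (use ck[OF that] in auto)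
    have Ak: "A j (j - k) = integral {c (k - 1)..c k} F / (c k - c (k - 1))" if "1 \<le> k" "k \<le> j" for k
      using Aeq[of j "j - k"] that by (simp add: F_def[abs_def] C_def)
    {
      have "omega (1 - \<alpha>) (C - c (j - 1)) * (c j - c (j - 1)) \<le> integral {c (j - 1)..c j} F"
        by (rule int_lb) (use ck[of j] j Fk[of j] a0 a1 in \<open>auto simp: F_def C_def intro!: omega_antimono\<close>)
      moreover have "omega (1 - \<alpha>) (C - c (j - 1)) > 0" using ck[of j] j a1 by (intro omega_pos) (auto simp: C_def)
      moreover have "c j - c (j - 1) > 0" using ck[of j] j by simp
      ultimately have "integral {c (j - 1)..c j} F > 0" by (meson less_le_trans mult_pos_pos)
      thus "A j 0 > 0" using Ak[of j] j ck[of j] by simp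
    }
  next
    fix j k assume jk: "1 \<le> k \<and> k + 1 \<le> j \<and> j \<le> N"
    define C where "C = c j"
    define F where "F s = omega (1 - \<alpha>) (C - s)" for s
    have C: "0 < C"
    proof -
      have "0 \<le> c (j - 1)" using cmono[of 0 "j - 1"] jk c0 by fastforce
      thus ?thesis using cstep[of j] jk unfolding C_def by simp
    qed
    have Fi: "F integrable_on {0..C}" unfolding F_def using F_integrable[OF a0 a1] C by simp
    have ck: "0 \<le> c (k - 1)" "c (k - 1) < c k" "c k \<le> C" if "1 \<le> k" "k \<le> j" for k
      using cmono[of 0 "k - 1"] cstep[of k] cmono[of k j] that jk c0 by (auto simp: C_def)
    have Fk: "F integrable_on {c (k - 1)..c k}" if "1 \<le> k" "k \<le> j" for k
      by (rule integrable_subinterval_real[OF Fi]) (use ck[OF that] in auto)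
    have Ak: "A j (j - k) = integral {c (k - 1)..c k} F / (c k - c (k - 1))" if "1 \<le> k" "k \<le> j" for k
      using Aeq[of j "j - k"] that by (simp add: F_def[abs_def] C_def)
    define V where "V = omega (1 - \<alpha>) (C - c k)"
    have k1: "c k < C" using ck[of "k+1"] jk by auto
    have "integral {c (k - 1)..c k} F \<le> V * (c k - c (k - 1))"
      by (rule int_ub) (use ck[of k] jk Fk[of k] a0 a1 k1 in \<open>auto simp: F_def V_def intro!: omega_antimono\<close>)
    hence 1: "A j (j - k) \<le> V" using Ak[of k] ck[of k] jk by (simp add: divide_le_eq)
    have "V * (c (k + 1) - c k) \<le> integral {c k..c (k + 1)} F"
      by (rule int_lb) (use ck[of "k+1"] jk Fk[of "k+1"] a0 a1 in \<open>auto simp: F_def V_def intro!: omega_antimono\<close>)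
    hence 2: "V \<le> A j (j - k - 1)" using Ak[of "k+1"] ck[of "k+1"] jk
      by (simp add: le_divide_eq Suc_diff_Suc)
    show "A j (j - k) \<le> A j (j - k - 1)" using 1 2 by simp
  next
    fix j assume j: "1 \<le> j \<and> j \<le> N"
    define C where "C = c j"
    define F where "F s = omega (1 - \<alpha>) (C - s)" for s
    have C: "0 < C"
    proof -
      have "0 \<le> c (j - 1)" using cmono[of 0 "j - 1"] j c0 by fastforce
      thus ?thesis using cstep[of j] j unfolding C_def by simp
    qed
    have Fi: "F integrable_on {0..C}" unfolding F_def using F_integrable[OF a0 a1] C by simp
    have Gi: "G integrable_on {0..C}" using Ginteg C by simp
    have FG: "((\<lambda>s. F s * G s) has_integral 1) {0..C}" unfolding F_def G_def using beta_one[OF a0 a1 C] .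
    have ck: "0 \<le> c (k - 1)" "c (k - 1) < c k" "c k \<le> C" if "1 \<le> k" "k \<le> j" for k
      using cmono[of 0 "k - 1"] cstep[of k] cmono[of k j] that j c0 by (auto simp: C_def)
    have sub: "h integrable_on {c (k - 1)..c k}" if "h integrable_on {0..C}" "1 \<le> k" "k \<le> j" for h :: "real \<Rightarrow> real" and k
      by (rule integrable_subinterval_real[OF that(1)]) (use ck[OF that(2,3)] in auto)
    have Ak: "A j (j - k) = integral {c (k - 1)..c k} F / (c k - c (k - 1))" if "1 \<le> k" "k \<le> j" for k
      using Aeq[of j "j - k"] that by (simp add: F_def[abs_def] C_def)
    have "1 = integral {c 0..c j} (\<lambda>s. F s * G s)" using FG c0 by (simp add: C_def integral_unique)
    also have "\<dots> = (\<Sum>k=1..j. integral {c (k - 1)..c k} (\<lambda>s. F s * G s))"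
      by (rule cells_sum) (use cmono j FG c0 C_def in auto)
    also have "\<dots> \<le> (\<Sum>k=1..j. A j (j - k) * \<Delta> k)"
    proof (rule sum_mono)
      fix k assume k: "k \<in> {1..j}"
      have "integral {c (k - 1)..c k} (\<lambda>s. F s * G s) \<le>
            integral {c (k - 1)..c k} F / (c k - c (k - 1)) * integral {c (k - 1)..c k} G"
      proof (rule cheb)
        show "c (k - 1) < c k" using ck k by auto
        show "F integrable_on {c (k - 1)..c k}" using sub[OF Fi] k by auto
        show "G integrable_on {c (k - 1)..c k}" using sub[OF Gi] k by auto
        show "(\<lambda>x. F x * G x) integrable_on {c (k - 1)..c k}" using sub[of "\<lambda>x. F x * G x"] FG k by auto
        show "F x \<le> F y" if "c (k - 1) < x" "x \<le> y" "y < c k" for x y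
          unfolding F_def using that ck[of k] k a0 a1 by (intro omega_antimono) auto
        show "G y \<le> G x" if "c (k - 1) < x" "x \<le> y" "y \<le> c k" for x y
          unfolding G_def using that ck[of k] k a0 a1 by (intro omega_antimono) auto
      qed
      thus "integral {c (k - 1)..c k} (\<lambda>s. F s * G s) \<le> A j (j - k) * \<Delta> k"
        using Ak[of k] k by (simp add: \<Delta>_def)
    qed
    finally show "(\<Sum>k=1..j. A j (j - k) * \<Delta> k) \<ge> 1" .
  qed
  show ?thesis
  proof
    fix n assume n: "n \<in> {1..N}"
    have nonneg: "dcc A n m \<ge> 0" if "m < n" for m
      by (rule dcc_nonneg[OF _ _ that]) (use P n in auto)
    have id: "(\<Sum>j=k..n. dcc A n (n - j) * A j (j - k)) = 1" if "1 \<le> k" "k \<le> n" for k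
      by (rule dcc_identity[OF _ that]) (use P n in force)
    have "(\<Sum>j=1..n. dcc A n (n - j)) \<le> (\<Sum>j=1..n. dcc A n (n - j) * (\<Sum>k=1..j. A j (j - k) * \<Delta> k))"
    proof (rule sum_mono)
      fix j assume j: "j \<in> {1..n}"
      have "dcc A n (n - j) * 1 \<le> dcc A n (n - j) * (\<Sum>k=1..j. A j (j - k) * \<Delta> k)"
        by (rule mult_left_mono) (use P j n nonneg[of "n - j"] in auto)
      thus "dcc A n (n - j) \<le> dcc A n (n - j) * (\<Sum>k=1..j. A j (j - k) * \<Delta> k)" by simp
    qed
    also have "\<dots> = (\<Sum>j=1..n. \<Sum>k=1..j. dcc A n (n - j) * A j (j - k) * \<Delta> k)"
      by (simp add: sum_distrib_left mult.assoc)
    also have "\<dots> = (\<Sum>k=1..n. \<Sum>j=k..n. dcc A n (n - j) * A j (j - k) * \<Delta> k)"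
      by (rule sum_swap_tri)
    also have "\<dots> = (\<Sum>k=1..n. \<Delta> k)"
      using id by (simp add: sum_distrib_right[symmetric])
    also have "\<dots> = integral {c 0..c n} G"
      unfolding \<Delta>_def
      by (rule cells_sum[symmetric]) (use cmono n Ginteg c0 cmono[of 0 n] in auto)
    also have "\<dots> = omega (1 + \<alpha>) (c n)"
      using G_integral[OF a0, of "c n"] c0 cmono[of 0 n] n by (simp add: G_def integral_unique)
    finally have S: "(\<Sum>j=1..n. dcc A n (n - j)) \<le> omega (1 + \<alpha>) (c n)" .
    show "(\<forall>k\<in>{1..n}. dcc (acoef t \<alpha>) n (n - k) \<ge> 0) \<and>
           (\<Sum>j = 1..n. dcc (acoef t \<alpha>) n (n - j)) \<le> omega (1 + \<alpha>) (tmid t n)"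
      using S nonneg n unfolding A_def c_def by auto
  qed
qed

end
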